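(* Let $p$ be a prime, let $U$ be an open subgroup of $S$ and let $H\neq\{t\}$ be a closed normal subgroup of $U$. Then $H$ contains an element of the form $v=t+v_1t^{pj+1}+\dots$ (i.e. $v\equiv t+v_1t^{pj+1}\pmod{t^{pj+2}}$) for some integer $j\ge1$ and some non-zero $v_1\in\mathbb F_p$; such an element necessarily has infinite order.
   Context: $S$ denotes the group, under substitution $(f\circ g)(t)=f(g(t))$, of all power series $t+\sum_{k\ge1}(a_{pk}t^{pk}+a_{pk+1}t^{pk+1})$ with coefficients in $\mathbb F_p$; it is a pro-$p$ group with the topology in which the subgroups $\{f\in S: f\equiv t\bmod t^n\}$ form a base of open neighbourhoods of the identity $t$. *)

theory Defs
  imports "HOL-Computational_Algebra.Formal_Power_Series" "HOL-Algebra.Group" "HOL-Algebra.Coset" "HOL-Library.Cardinality"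
begin

text \<open>The coefficient field F_p is modelled by an arbitrary finite field type 'a with
  CARD('a) = p prime (any such field is F_p).\<close>

definition Sset :: "('a::{field,finite}) fps set" where
  "Sset = {f. fps_nth f 0 = 0 \<and> fps_nth f 1 = 1 \<and>
              (\<forall>n\<ge>2. n mod CARD('a) \<noteq> 0 \<and> n mod CARD('a) \<noteq> 1 \<longrightarrow> fps_nth f n = 0)}"

definition Sgrp :: "('a::{field,finite}) fps monoid" where
  "Sgrp = \<lparr>carrier = Sset, mult = (\<lambda>f g. fps_compose f g), one = fps_X\<rparr>"

text \<open>Basic open neighbourhoods of the identity: f congruent to t mod t^n.\<close>
definition Snbhd :: "nat \<Rightarrow> ('a::{field,finite}) fps set" where
  "Snbhd n = {f \<in> Sset. \<forall>k<n. fps_nth f (k) = fps_nth fps_X k}"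

definition open_subgroup_S :: "('a::{field,finite}) fps set \<Rightarrow> bool" where
  "open_subgroup_S U \<longleftrightarrow> subgroup U Sgrp \<and> (\<exists>n. Snbhd n \<subseteq> U)"

text \<open>A subset H of S is closed iff it contains every f in S that lies in H * Snbhd n for all n,
  i.e. the closure of H is the intersection of the sets H * Snbhd n.\<close>
definition closed_in_S :: "('a::{field,finite}) fps set \<Rightarrow> bool" where
  "closed_in_S H \<longleftrightarrow> H \<subseteq> Sset \<and>
     (\<forall>f \<in> Sset. (\<forall>n. \<exists>h \<in> H. \<exists>g \<in> Snbhd n. f = fps_compose h g) \<longrightarrow> f \<in> H)"

end

theory Submission
  imports Defs "HOL-Number_Theory.Residues"
begin

unbundle fps_syntax

definition ceq :: "nat \<Rightarrow> 'b::comm_ring_1 fps \<Rightarrow> 'b fps \<Rightarrow> bool" where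
  "ceq N f g \<longleftrightarrow> (\<forall>k<N. f $ k = g $ k)"

lemma ceq_refl[simp]: "ceq N f f" by (simp add: ceq_def)
lemma ceq_sym: "ceq N f g \<Longrightarrow> ceq N g f" by (simp add: ceq_def)
lemma ceq_trans: "ceq N f g \<Longrightarrow> ceq N g h \<Longrightarrow> ceq N f h" by (simp add: ceq_def)
lemma ceq_mono: "ceq N f g \<Longrightarrow> M \<le> N \<Longrightarrow> ceq M f g" by (simp add: ceq_def)
lemma ceq_add: "ceq N f g \<Longrightarrow> ceq N f' g' \<Longrightarrow> ceq N (f + f') (g + g')" by (simp add: ceq_def)
lemma ceq_diff: "ceq N f g \<Longrightarrow> ceq N f' g' \<Longrightarrow> ceq N (f - f') (g - g')" by (simp add: ceq_def)
lemma ceq_0_iff: "ceq N f g \<longleftrightarrow> ceq N (f - g) 0" by (simp add: ceq_def)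
lemma ceq_to0: "ceq N f g \<Longrightarrow> ceq N (f - g) 0" by (simp add: ceq_def)
lemma ceq_from0: "ceq N (f - g) 0 \<Longrightarrow> ceq N f g" by (simp add: ceq_def)

lemma ceq_mult: assumes "ceq N f g" "ceq N f' g'" shows "ceq N (f * f') (g * g')"
  unfolding ceq_def
proof (intro allI impI)
  fix k assume k: "k < N"
  show "(f * f') $ k = (g * g') $ k" unfolding fps_mult_nth
    using assms k by (intro sum.cong) (auto simp: ceq_def)
qed

lemma ceq_power: "ceq N f g \<Longrightarrow> ceq N (f ^ n) (g ^ n)"
  by (induction n) (auto intro: ceq_mult)

lemma ceq_compose_left: assumes "ceq N f g" shows "ceq N (f oo h) (g oo h)"
  unfolding ceq_def
proof (intro allI impI)
  fix k assume k: "k < N"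
  show "(f oo h) $ k = (g oo h) $ k" unfolding fps_compose_nth
    using assms k by (intro sum.cong) (auto simp: ceq_def)
qed

lemma ceq_compose_right: assumes "ceq N g h" shows "ceq N (f oo g) (f oo h)"
  unfolding ceq_def
proof (intro allI impI)
  fix k assume k: "k < N"
  have "\<And>i. ceq N (g ^ i) (h ^ i)" using assms by (rule ceq_power)
  then show "(f oo g) $ k = (f oo h) $ k" unfolding fps_compose_nth
    using k by (intro sum.cong) (auto simp: ceq_def)
qed

lemma ceq_deriv: "ceq (Suc N) f g \<Longrightarrow> ceq N (fps_deriv f) (fps_deriv g)"
  by (simp add: ceq_def)

lemma ceq0_mult: assumes "ceq a f 0" "ceq b g 0" shows "ceq (a + b) (f * g) 0"
  unfolding ceq_def
proof (intro allI impI)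
  fix k assume k: "k < a + b"
  show "(f * g) $ k = 0 $ k" unfolding fps_mult_nth
  proof (simp, intro sum.neutral ballI)
    fix i assume "i \<in> {0..k}"
    then show "f $ i * g $ (k - i) = 0" using assms k
      by (cases "i < a") (auto simp: ceq_def)
  qed
qed

lemma ceq0_mult_left: "ceq a f 0 \<Longrightarrow> ceq a (g * f) 0"
  using ceq0_mult[of 0 g a f] by (simp add: ceq_def)
lemma ceq0_mult_right: "ceq a f 0 \<Longrightarrow> ceq a (f * g) 0"
  using ceq0_mult[of a f 0 g] by (simp add: ceq_def)

lemma ceq0_power: "ceq a f 0 \<Longrightarrow> ceq (a * n) (f ^ n) 0"
proof (induction n)
  case 0 then show ?case by (simp add: ceq_def)
next
  case (Suc n)
  then have "ceq (a + a * n) (f * f ^ n) 0" by (intro ceq0_mult) auto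
  then show ?case by simp
qed

lemma ceq0_Xpow: "ceq a (fps_X ^ a * f) 0"
  by (simp add: ceq_def fps_X_power_mult_nth)

lemma ceq0_shift: assumes "ceq a f 0" shows "f = fps_X ^ a * fps_shift a f"
proof -
  have "\<forall>i<a. f $ i = 0" using assms by (simp add: ceq_def)
  then show ?thesis
    by (intro fps_ext) (auto simp: fps_X_power_mult_nth)
qed

lemma char_eq: assumes "prime CARD('a::{field,finite})" shows "CHAR('a) = CARD('a)"
proof -
  have d: "CHAR('a) dvd CARD('a)" by (rule CHAR_dvd_CARD)
  have "CHAR('a) = 1 \<or> CHAR('a) = CARD('a)" using assms d unfolding prime_nat_iff by blast
  then show ?thesis using CHAR_not_1[where 'a='a] by auto
qed

lemma of_nat_card: assumes "prime CARD('a::{field,finite})" shows "(of_nat CARD('a) :: 'a) = 0"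
  using char_eq[OF assms] of_nat_CHAR[where 'a='a] by simp

lemma of_nat_mod_card: assumes "prime CARD('a::{field,finite})"
  shows "(of_nat n :: 'a) = of_nat (n mod CARD('a))"
proof -
  have "(of_nat n :: 'a) = of_nat (n mod CARD('a) + CARD('a) * (n div CARD('a)))" by simp
  also have "\<dots> = of_nat (n mod CARD('a)) + of_nat CARD('a) * of_nat (n div CARD('a))"
    by (simp only: of_nat_add of_nat_mult)
  finally show ?thesis using of_nat_card[OF assms] by simp
qed

lemma of_nat_eq0_iff: assumes "prime CARD('a::{field,finite})"
  shows "(of_nat n :: 'a) = 0 \<longleftrightarrow> CARD('a) dvd n"
  using of_nat_eq_0_iff_char_dvd[where 'a='a] char_eq[OF assms] by simp

lemma frob: assumes "prime CARD('a::{field,finite})"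
  shows "((x::'a fps) + y) ^ CARD('a) = x ^ CARD('a) + y ^ CARD('a)"
proof -
  have c: "CHAR('a fps) = CARD('a)" using char_eq[OF assms] by simp
  show ?thesis by (rule freshmans_dream) (use c assms in auto)
qed

definition psup :: "'a::{field,finite} fps \<Rightarrow> bool" where
  "psup G \<longleftrightarrow> (\<forall>n. G $ n \<noteq> 0 \<longrightarrow> CARD('a) dvd n)"

lemma powdiff:
  fixes x y :: "'b::comm_ring_1 fps"
  assumes "ceq A (x - y) 0" "ceq s x 0" "ceq s y 0" "l \<ge> 1"
  shows "ceq (A + (l - 1) * s) (x ^ l - y ^ l) 0"
  using assms(4)
proof (induction l rule: dec_induct)
  case base then show ?case using assms(1) by simp
next
  case (step l)
  have e: "x ^ Suc l - y ^ Suc l = x ^ l * (x - y) + (x ^ l - y ^ l) * y"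
    by (simp add: algebra_simps)
  have 1: "ceq (s * l + A) (x ^ l * (x - y)) 0"
    by (intro ceq0_mult ceq0_power assms(1,2))
  have 2: "ceq (A + (l - 1) * s + s) ((x ^ l - y ^ l) * y) 0"
    by (intro ceq0_mult step.IH assms(3))
  have "A + (Suc l - 1) * s \<le> s * l + A" by simp
  moreover have "A + (Suc l - 1) * s \<le> A + (l - 1) * s + s" using step.hyps
    by (cases l) (auto simp: algebra_simps)
  ultimately have "ceq (A + (Suc l - 1) * s) (x ^ l * (x - y)) 0"
    "ceq (A + (Suc l - 1) * s) ((x ^ l - y ^ l) * y) 0"
    using ceq_mono[OF 1] ceq_mono[OF 2] by auto
  from ceq_add[OF this] show ?case unfolding e by simp
qed

lemma Sset_0: "f \<in> Sset \<Longrightarrow> f $ 0 = 0" by (simp add: Sset_def)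
lemma Sset_1: "f \<in> Sset \<Longrightarrow> f $ 1 = 1" by (simp add: Sset_def)
lemma Sset_supp: "f \<in> (Sset :: 'a::{field,finite} fps set) \<Longrightarrow> f $ n \<noteq> 0 \<Longrightarrow> n \<ge> 2 \<Longrightarrow>
    n mod CARD('a) = 0 \<or> n mod CARD('a) = 1"
  by (auto simp: Sset_def)

lemma psup_deriv:
  assumes p: "prime CARD('a::{field,finite})" and f: "(f::'a fps) \<in> Sset"
  shows "psup (fps_deriv f - 1)"
  unfolding psup_def
proof (intro allI impI)
  fix n assume nz: "(fps_deriv f - 1) $ n \<noteq> 0"
  show "CARD('a) dvd n"
  proof (cases "n = 0")
    case False
    then have a: "of_nat (n + 1) * f $ (n + 1) \<noteq> (0::'a)" using nz by simp
    then have b: "f $ (n+1) \<noteq> 0" by auto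
    have "(n + 1) mod CARD('a) = 0 \<or> (n + 1) mod CARD('a) = 1"
      using Sset_supp[OF f b] False by auto
    moreover have "(n + 1) mod CARD('a) \<noteq> 0"
    proof
      assume "(n + 1) mod CARD('a) = 0"
      then have "(of_nat (n+1) :: 'a) = 0" using of_nat_mod_card[OF p, of "n+1"] by simp
      then show False using a by simp
    qed
    ultimately have "(n + 1) mod CARD('a) = 1" by blast
    then have "n mod CARD('a) = 0" by (auto simp: mod_Suc split: if_splits)
    then show ?thesis by (rule mod_0_imp_dvd)
  qed simp
qed

lemma psup_R:
  assumes p: "prime CARD('a::{field,finite})" and f: "(f::'a fps) \<in> Sset"
  shows "psup (f - fps_X * fps_deriv f)"
  unfolding psup_def
proof (intro allI impI)
  fix n assume nz: "(f - fps_X * fps_deriv f) $ n \<noteq> 0"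
  have n0: "n \<noteq> 0" using nz Sset_0[OF f] by (cases n) auto
  have e: "(f - fps_X * fps_deriv f) $ n = (1 - of_nat n) * f $ n"
    using n0 by (cases n) (auto simp: algebra_simps)
  then have a: "(1 - of_nat n) * f $ n \<noteq> (0::'a)" using nz by simp
  then have b: "f $ n \<noteq> 0" by auto
  have n1: "n \<noteq> 1" using a by auto
  have "n mod CARD('a) = 0 \<or> n mod CARD('a) = 1"
    using Sset_supp[OF f b] n0 n1 by auto
  moreover have "n mod CARD('a) \<noteq> 1"
  proof
    assume "n mod CARD('a) = 1"
    then have "(of_nat n :: 'a) = 1" using of_nat_mod_card[OF p, of n] by simp
    then show False using a by simp
  qed
  ultimately show "CARD('a) dvd n" by auto
qed

lemma ceq_X_0: "r \<ge> 1 \<Longrightarrow> ceq r g fps_X \<Longrightarrow> g $ 0 = 0"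
  by (auto simp: ceq_def)

lemma psup_compose:
  assumes p: "prime CARD('a::{field,finite})" and G: "psup (G::'a fps)" and e: "ceq e G 0"
    and r: "r \<ge> 1" and g: "ceq r g fps_X"
  shows "ceq (e + CARD('a) * (r - 1)) (G oo g) G"
  unfolding ceq_def
proof (intro allI impI)
  define q where "q = CARD('a)"
  have q1: "q \<ge> 1" using prime_gt_1_nat[OF p] by (simp add: q_def)
  fix n assume n: "n < e + CARD('a) * (r - 1)"
  have g0: "g $ 0 = 0" using ceq_X_0[OF r g] .
  have key: "(g ^ i) $ n = (fps_X ^ i) $ n" if Gi: "G $ i \<noteq> 0" for i
  proof -
    have "q dvd i" using G Gi by (simp add: psup_def q_def)
    then obtain l where i: "i = q * l" by blast
    have ie: "i \<ge> e" using e Gi by (auto simp: ceq_def not_less[symmetric])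
    show ?thesis
    proof (cases "l = 0")
      case True then show ?thesis using i by simp
    next
      case False
      have fr: "g ^ q - fps_X ^ q = (g - fps_X) ^ q"
        using frob[OF p, of "g - fps_X" fps_X] by (simp add: q_def)
      have gX: "ceq r (g - fps_X) 0" using g by (simp add: ceq_def)
      have A: "ceq (r * q) (g ^ q - fps_X ^ q) 0" unfolding fr by (rule ceq0_power[OF gX])
      have g1: "ceq 1 g 0" using g0 by (simp add: ceq_def)
      have s1: "ceq q (g ^ q) 0" using ceq0_power[OF g1, of q] by simp
      have s2: "ceq q ((fps_X :: 'a fps) ^ q) 0" by (simp add: ceq_def)
      have "ceq (r * q + (l - 1) * q) ((g ^ q) ^ l - (fps_X ^ q) ^ l) 0"
        using powdiff[OF A s1 s2] False by simp
      moreover have "n < r * q + (l - 1) * q"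
      proof -
        have "n < e + q * (r - 1)" using n by (simp add: q_def)
        also have "\<dots> \<le> q * l + q * (r - 1)" using ie i by simp
        also have "\<dots> = r * q + (l - 1) * q" using False r
          by (cases l; cases r) (auto simp: algebra_simps)
        finally show ?thesis .
      qed
      ultimately show ?thesis unfolding i by (auto simp: ceq_def power_mult)
    qed
  qed
  have "(G oo g) $ n = (\<Sum>i = 0..n. G $ i * (fps_X ^ i) $ n)"
    unfolding fps_compose_nth
  proof (intro sum.cong refl)
    fix i show "G $ i * (g ^ i) $ n = G $ i * (fps_X ^ i) $ n"
      using key[of i] by (cases "G $ i = 0") simp_all
  qed
  also have "\<dots> = (\<Sum>i = 0..n. if i = n then G $ i else 0)"
    by (intro sum.cong) auto
  also have "\<dots> = G $ n" by (simp add: sum.delta')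
  finally show "(G oo g) $ n = G $ n" .
qed

lemma ceq_deriv_one:
  assumes "ceq d (f::'a::{field,finite} fps) fps_X"
  shows "ceq (d - 1) (fps_deriv f - 1) 0"
  unfolding ceq_def
proof (intro allI impI)
  fix n assume n: "n < d - 1"
  then have "f $ (n+1) = fps_X $ (n+1)" using assms by (auto simp: ceq_def)
  then show "(fps_deriv f - 1) $ n = 0 $ n" by (cases n) auto
qed

lemma ceq_R:
  assumes "ceq d (f::'a::{field,finite} fps) fps_X"
  shows "ceq d (f - fps_X * fps_deriv f) 0"
  unfolding ceq_def
proof (intro allI impI)
  fix n assume n: "n < d"
  then have "f $ n = fps_X $ n" using assms by (auto simp: ceq_def)
  then show "(f - fps_X * fps_deriv f) $ n = 0 $ n" by (cases n) auto
qed

lemma TL: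
  assumes p: "prime CARD('a::{field,finite})" and f: "(f::'a fps) \<in> Sset"
    and d: "d \<ge> 1" "ceq d f fps_X" and r: "r \<ge> 1" "ceq r g fps_X"
  shows "ceq (d + CARD('a) * (r - 1)) (f oo g) (g * fps_deriv f + (f - fps_X * fps_deriv f))"
proof -
  define Df where "Df = fps_deriv f"
  define Rf where "Rf = f - fps_X * Df"
  have g0: "g $ 0 = 0" using ceq_X_0[OF r] .
  have fe: "f = fps_X * (Df - 1) + fps_X + Rf" by (simp add: Rf_def algebra_simps)
  have "f oo g = (fps_X oo g) * ((Df - 1) oo g) + (fps_X oo g) + (Rf oo g)"
    by (subst fe) (simp add: fps_compose_add_distrib fps_compose_mult_distrib[OF g0])
  also have "\<dots> = g * ((Df - 1) oo g) + g + (Rf oo g)" using g0 by simp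
  finally have e1: "f oo g = g * ((Df - 1) oo g) + g + (Rf oo g)" .
  have c1: "ceq (d - 1 + CARD('a) * (r - 1)) ((Df - 1) oo g) (Df - 1)"
    by (rule psup_compose[OF p _ _ r]) (use psup_deriv[OF p f] ceq_deriv_one[OF d(2)] in \<open>simp_all add: Df_def\<close>)
  have g1: "ceq 1 g 0" using g0 by (simp add: ceq_def)
  have "ceq (1 + (d - 1 + CARD('a) * (r - 1))) (g * (((Df - 1) oo g) - (Df - 1))) 0"
    using ceq0_mult[OF g1 ceq_to0[OF c1]] by simp
  then have "ceq (d + CARD('a) * (r - 1)) (g * ((Df - 1) oo g) - g * (Df - 1)) 0"
    using d(1) by (simp add: algebra_simps)
  then have c2: "ceq (d + CARD('a) * (r - 1)) (g * ((Df - 1) oo g)) (g * (Df - 1))"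
    by (rule ceq_from0)
  have c3: "ceq (d + CARD('a) * (r - 1)) (Rf oo g) Rf"
    by (rule psup_compose[OF p _ _ r]) (use psup_R[OF p f] ceq_R[OF d(2)] in \<open>simp_all add: Rf_def Df_def\<close>)
  have "ceq (d + CARD('a) * (r - 1)) (f oo g) (g * (Df - 1) + g + Rf)"
    unfolding e1 by (intro ceq_add c2 c3 ceq_refl)
  then show ?thesis by (simp add: Df_def Rf_def algebra_simps)
qed

lemma LT:
  assumes p: "prime CARD('a::{field,finite})" and f: "(f::'a fps) \<in> Sset"
    and d: "D \<ge> 1" "ceq D f fps_X" and r: "r \<ge> 2" "ceq r P fps_X"
  shows "ceq (D + 1) ((f oo P) - P) (f - fps_X)"
proof -
  have t: "ceq (D + CARD('a) * (r - 1)) (f oo P) (P * fps_deriv f + (f - fps_X * fps_deriv f))"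
    using TL[OF p f d _ r(2)] r(1) by simp
  have q: "CARD('a) \<ge> 1" using prime_gt_1_nat[OF p] by simp
  have "D + 1 \<le> D + CARD('a) * (r - 1)" using q r(1) by (simp add: mult_le_mono)
  then have t': "ceq (D + 1) (f oo P) (P * fps_deriv f + (f - fps_X * fps_deriv f))"
    using ceq_mono[OF t] by blast
  have "ceq (r + (D - 1)) ((P - fps_X) * (fps_deriv f - 1)) 0"
    by (rule ceq0_mult[OF ceq_to0[OF r(2)] ceq_deriv_one[OF d(2)]])
  then have "ceq (D + 1) ((P - fps_X) * (fps_deriv f - 1)) 0"
    by (rule ceq_mono) (use r(1) d(1) in simp)
  then have "ceq (D + 1) ((P * fps_deriv f + (f - fps_X * fps_deriv f)) - (P + (f - fps_X))) 0"
    by (simp add: algebra_simps)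
  then have "ceq (D + 1) (P * fps_deriv f + (f - fps_X * fps_deriv f)) (P + (f - fps_X))"
    by (rule ceq_from0)
  from ceq_diff[OF ceq_trans[OF t' this] ceq_refl[of _ P]] show ?thesis by simp
qed

lemma CL:
  assumes p: "prime CARD('a::{field,finite})" and f: "(f::'a fps) \<in> Sset"
    and d: "D \<ge> 2" "ceq D f fps_X" "ceq D g fps_X"
  shows "ceq D (f oo g) fps_X" and "(f oo g) $ D = f $ D + g $ D"
proof -
  have l: "ceq (D + 1) ((f oo g) - g) (f - fps_X)" using LT[OF p f _ d(2) d(1,3)] d(1) by simp
  have l': "\<And>k. k < D + 1 \<Longrightarrow> (f oo g) $ k - g $ k = f $ k - fps_X $ k"
    using l unfolding ceq_def by (simp only: fps_sub_nth)
  show "ceq D (f oo g) fps_X" unfolding ceq_def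
  proof (intro allI impI)
    fix k assume k: "k < D"
    have "f $ k = fps_X $ k" "g $ k = fps_X $ k" using d(2,3) k unfolding ceq_def by auto
    then show "(f oo g) $ k = fps_X $ k" using l'[of k] k by simp
  qed
  have "(f oo g) $ D - g $ D = f $ D - fps_X $ D" using l' by simp
  then show "(f oo g) $ D = f $ D + g $ D" using d(1) by (simp add: algebra_simps)
qed

lemma mod_q1: "(q::nat) \<ge> 2 \<Longrightarrow> (q * j + 1) mod q = 1"
  by (simp add: mod_Suc)

lemma ofnat_q1: assumes p: "prime CARD('a::{field,finite})"
  shows "(of_nat (CARD('a) * j + 1) :: 'a) = 1"
  using of_nat_mod_card[OF p, of "CARD('a) * j + 1"] mod_q1[of "CARD('a)" j]
    prime_ge_2_nat[OF p] by simp

definition itr :: "'a::{field,finite} fps \<Rightarrow> nat \<Rightarrow> 'a fps" where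
  "itr w n = ((\<lambda>g. w oo g) ^^ n) fps_X"

lemma itr_0[simp]: "itr w 0 = fps_X" by (simp add: itr_def)
lemma itr_Suc: "itr w (Suc n) = w oo itr w n" by (simp add: itr_def)

lemma itr_lead:
  assumes p: "prime CARD('a::{field,finite})" and w: "(w::'a fps) \<in> Sset"
    and D: "D \<ge> 2" "ceq D w fps_X"
  shows "ceq D (itr w m) fps_X \<and> (itr w m) $ D = of_nat m * w $ D"
proof (induction m)
  case 0 then show ?case using D(1) by simp
next
  case (Suc m)
  then show ?case using CL[OF p w D(1,2), of "itr w m"]
    by (simp add: itr_Suc algebra_simps)
qed

lemma ceq0_psup_ext:
  assumes "psup (G::'a::{field,finite} fps)" "ceq (CARD('a) * j + 1) G 0"
  shows "ceq (CARD('a) * (j + 1)) G 0"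
  unfolding ceq_def
proof (intro allI impI)
  fix n assume n: "n < CARD('a) * (j + 1)"
  show "G $ n = 0 $ n"
  proof (cases "n < CARD('a) * j + 1")
    case True then show ?thesis using assms(2) by (simp add: ceq_def)
  next
    case False
    have "\<not> CARD('a) dvd n"
    proof
      assume "CARD('a) dvd n"
      then obtain l where l: "n = CARD('a) * l" by blast
      have "j < l"
      proof (rule ccontr)
        assume "\<not> j < l"
        then have "l \<le> j" by simp
        then show False using False l mult_le_mono2[of l j "CARD('a)"] by linarith
      qed
      moreover have "l < j + 1"
      proof (rule ccontr)
        assume "\<not> l < j + 1"
        then have "j + 1 \<le> l" by simp
        then show False using n l mult_le_mono2[of "j+1" l "CARD('a)"] by linarith
      qed
      ultimately show False by simp
    qed
    then show ?thesis using assms(1) by (auto simp: psup_def)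
  qed
qed

lemma itr_p:
  assumes p: "prime CARD('a::{field,finite})" and w: "(w::'a fps) \<in> Sset"
    and j: "j \<ge> 1" and D: "ceq (CARD('a) * j + 1) w fps_X" and c: "w $ (CARD('a) * j + 1) \<noteq> 0"
  shows "ceq (CARD('a) * (CARD('a) * j) + 1) (itr w CARD('a)) fps_X \<and>
         (itr w CARD('a)) $ (CARD('a) * (CARD('a) * j) + 1) = (w $ (CARD('a) * j + 1)) ^ CARD('a)"
proof -
  define q where "q = CARD('a)"
  have q2: "q \<ge> 2" using prime_ge_2_nat[OF p] by (simp add: q_def)
  define d where "d = q * j + 1"
  have d2: "d \<ge> 2" using q2 j by (simp add: d_def)
  define M where "M = d + q * (d - 1)"
  define Dw where "Dw = fps_deriv w"
  define Rw where "Rw = w - fps_X * Dw"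
  have step: "ceq M (itr w (Suc i)) (itr w i * Dw + Rw)" for i
  proof -
    have i: "ceq d (itr w i) fps_X" using itr_lead[OF p w d2] D by (simp add: d_def q_def)
    have D': "ceq d w fps_X" using D by (simp add: d_def q_def)
    have "ceq (d + CARD('a) * (d - 1)) (w oo itr w i) (itr w i * fps_deriv w + (w - fps_X * fps_deriv w))"
      by (rule TL[OF p w _ D' _ i]) (use d2 in auto)
    then show ?thesis
      by (simp add: itr_Suc M_def Dw_def Rw_def q_def)
  qed
  have form: "ceq M (itr w i) (fps_X * Dw ^ i + Rw * (\<Sum>l<i. Dw ^ l))" for i
  proof (induction i)
    case 0 then show ?case by simp
  next
    case (Suc i)
    have "ceq M (itr w (Suc i)) ((fps_X * Dw ^ i + Rw * (\<Sum>l<i. Dw ^ l)) * Dw + Rw)"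
      using ceq_trans[OF step ceq_add[OF ceq_mult[OF Suc.IH ceq_refl] ceq_refl]] .
    moreover have "(fps_X * Dw ^ i + Rw * (\<Sum>l<i. Dw ^ l)) * Dw + Rw =
        fps_X * Dw ^ Suc i + Rw * (\<Sum>l<Suc i. Dw ^ l)"
      by (simp add: sum.lessThan_Suc_shift sum_distrib_left algebra_simps power_Suc2
          del: sum.lessThan_Suc)
    ultimately show ?case by simp
  qed
  define E where "E = Dw - 1"
  have E0: "ceq (q * j) E 0" using ceq_deriv_one[OF D] by (simp add: E_def Dw_def q_def)
  have Ec: "E $ (q * j) = w $ d"
  proof -
    have "E $ (q * j) = of_nat d * w $ d" using j q2 by (simp add: E_def Dw_def d_def)
    also have "(of_nat d :: 'a) = 1" using ofnat_q1[OF p, of j]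
      by (simp add: d_def q_def)
    finally show ?thesis by simp
  qed
  have Enz: "E \<noteq> 0" using Ec c by (auto simp: d_def q_def)
  have frE: "Dw ^ q = E ^ q + 1"
    using frob[OF p, of E 1] by (simp add: E_def q_def)
  have sumE: "(\<Sum>l<q. Dw ^ l) = E ^ (q - 1)"
  proof -
    have "E * (\<Sum>l<q. Dw ^ l) = Dw ^ q - 1" using power_diff_1_eq[of Dw q] by (simp add: E_def)
    also have "\<dots> = E * E ^ (q - 1)" using frE q2
      by (simp add: power_Suc[symmetric])
    finally show ?thesis using Enz by simp
  qed
  have R0: "ceq (q * (j + 1)) Rw 0"
    by (rule ceq0_psup_ext[OF psup_R[OF p w], unfolded Dw_def[symmetric] Rw_def[symmetric] q_def[symmetric]])
       (use ceq_R[OF D] in \<open>simp add: Rw_def Dw_def q_def\<close>)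
  have RE: "ceq (q * (j + 1) + q * j * (q - 1)) (Rw * E ^ (q - 1)) 0"
    by (rule ceq0_mult[OF R0 ceq0_power[OF E0]])
  have qj: "1 \<le> q * j" using q2 j by simp
  have Mq: "q * (q * j) + 2 \<le> M" using qj
    by (simp add: M_def d_def)
  have Rq: "q * (q * j) + 2 \<le> q * (j + 1) + q * j * (q - 1)"
  proof -
    obtain q' where q': "q = Suc q'" using q2 by (cases q) auto
    have "q * j * (q - 1) + q * j = q * (q * j)" unfolding q' by (simp add: algebra_simps)
    then show ?thesis using q2 by simp
  qed
  define E' where "E' = fps_shift (q * j) E"
  have Esh: "E = fps_X ^ (q * j) * E'" using ceq0_shift[OF E0] by (simp add: E'_def)
  have E'0: "E' $ 0 = w $ d" using Ec by (simp add: E'_def)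
  have "E ^ q = fps_X ^ (q * j * q) * E' ^ q"
    unfolding Esh power_mult_distrib power_mult ..
  then have XE: "fps_X * E ^ q = fps_X ^ (q * (q * j) + 1) * E' ^ q"
    by (simp add: mult.commute[of "q * j" q] mult.assoc)
  have fin: "ceq (q * (q * j) + 2) (itr w q) (fps_X + fps_X ^ (q * (q * j) + 1) * E' ^ q)"
  proof -
    have a: "ceq (q * (q * j) + 2) (itr w q) (fps_X * Dw ^ q + Rw * (\<Sum>l<q. Dw ^ l))"
      using ceq_mono[OF form Mq] .
    have "fps_X * Dw ^ q + Rw * (\<Sum>l<q. Dw ^ l) = fps_X + fps_X * E ^ q + Rw * E ^ (q - 1)"
      unfolding frE sumE by (simp add: distrib_left)
    also have "\<dots> = (fps_X + fps_X ^ (q * (q * j) + 1) * E' ^ q) + Rw * E ^ (q - 1)"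
      unfolding XE ..
    finally have b: "fps_X * Dw ^ q + Rw * (\<Sum>l<q. Dw ^ l) =
        (fps_X + fps_X ^ (q * (q * j) + 1) * E' ^ q) + Rw * E ^ (q - 1)" .
    have c: "ceq (q * (q * j) + 2) (Rw * E ^ (q - 1)) 0" using ceq_mono[OF RE Rq] .
    have "ceq (q * (q * j) + 2) ((fps_X + fps_X ^ (q * (q * j) + 1) * E' ^ q) + Rw * E ^ (q - 1))
        ((fps_X + fps_X ^ (q * (q * j) + 1) * E' ^ q) + 0)"
      by (rule ceq_add[OF ceq_refl c])
    then show ?thesis using a b by (auto intro: ceq_trans)
  qed
  have "ceq (q * (q * j) + 1) (itr w q) fps_X" unfolding ceq_def
  proof (intro allI impI)
    fix k assume k: "k < q * (q * j) + 1"
    then have "(itr w q) $ k = (fps_X + fps_X ^ (q * (q * j) + 1) * E' ^ q) $ k"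
      using fin by (simp add: ceq_def)
    then show "(itr w q) $ k = fps_X $ k" using k by (simp add: fps_X_power_mult_nth del: power_Suc)
  qed
  moreover have "(itr w q) $ (q * (q * j) + 1) = (w $ d) ^ q"
  proof -
    have "(itr w q) $ (q * (q * j) + 1) = (fps_X + fps_X ^ (q * (q * j) + 1) * E' ^ q) $ (q * (q * j) + 1)"
      using fin by (simp add: ceq_def)
    also have "\<dots> = (E' ^ q) $ 0" using q2 j by (simp add: fps_X_power_mult_nth del: power_Suc)
    also have "\<dots> = (w $ d) ^ q" by (simp add: fps_power_zeroth E'0)
    finally show ?thesis .
  qed
  ultimately show ?thesis by (simp add: q_def d_def)
qed

lemma compose_u:
  assumes "(h::'a::{field,finite} fps) $ 0 = 0"
  shows "(fps_X + fps_const c * fps_X ^ n) oo h = h + fps_const c * h ^ n"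
  using assms by (simp add: fps_compose_add_distrib fps_compose_mult_distrib fps_compose_power[symmetric])

lemma deriv_u:
  assumes p: "prime CARD('a::{field,finite})"
  shows "fps_deriv (fps_X + fps_const (c::'a) * fps_X ^ (CARD('a) * m + 1)) = 1 + fps_const c * fps_X ^ (CARD('a) * m)"
proof (rule fps_ext)
  fix n
  have o: "(of_nat (CARD('a) * m + 1) :: 'a) = 1" by (rule ofnat_q1[OF p])
  show "fps_deriv (fps_X + fps_const c * fps_X ^ (CARD('a) * m + 1)) $ n = (1 + fps_const c * fps_X ^ (CARD('a) * m)) $ n"
    using o by (auto simp del: power_Suc simp: fps_X_power_mult_nth)
qed

lemma Xpow_lead: "ceq (J + 1) (fps_X ^ J * G) (fps_const (G $ 0) * fps_X ^ J)"
  by (auto simp: ceq_def fps_X_power_mult_nth)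

lemma powdiff2:
  fixes x y :: "'b::comm_ring_1 fps"
  assumes A: "ceq A (x - y) 0" and s: "ceq s x 0" "ceq s y 0"
  shows "ceq (2 * A + s * m) (x ^ (m + 2) - y ^ (m + 2) - of_nat (m + 2) * y ^ (m + 1) * (x - y)) 0"
proof (induction m)
  case 0
  have "x ^ (0 + 2) - y ^ (0 + 2) - of_nat (0 + 2) * y ^ (0 + 1) * (x - y) = (x - y) * (x - y)"
    by (simp add: algebra_simps power2_eq_square)
  moreover have "2 * A + s * 0 = A + A" by simp
  ultimately show ?case using ceq0_mult[OF A A] by (simp only:)
next
  case (Suc m)
  define T where "T = x ^ (m + 2) - y ^ (m + 2) - of_nat (m + 2) * y ^ (m + 1) * (x - y)"
  have e: "x ^ (Suc m + 2) - y ^ (Suc m + 2) - of_nat (Suc m + 2) * y ^ (Suc m + 1) * (x - y)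
      = x * T + of_nat (m + 2) * y ^ (m + 1) * ((x - y) * (x - y))"
    unfolding T_def by (simp add: algebra_simps)
  have 1: "ceq (s + (2 * A + s * m)) (x * T) 0" using ceq0_mult[OF s(1) Suc.IH[folded T_def]] .
  have 2: "ceq (s * (m + 1) + (A + A)) (y ^ (m + 1) * ((x - y) * (x - y))) 0"
    using ceq0_mult[OF ceq0_power[OF s(2)] ceq0_mult[OF A A]] .
  have 3: "ceq (s * (m + 1) + (A + A)) (of_nat (m + 2) * y ^ (m + 1) * ((x - y) * (x - y))) 0"
    using ceq0_mult_left[OF 2, of "of_nat (m + 2)"] by (simp add: mult.assoc)
  have "ceq (2 * A + s * Suc m) (x * T) 0" by (rule ceq_mono[OF 1]) simp
  moreover have "ceq (2 * A + s * Suc m) (of_nat (m + 2) * y ^ (m + 1) * ((x - y) * (x - y))) 0"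
    by (rule ceq_mono[OF 3]) simp
  ultimately have "ceq (2 * A + s * Suc m) (x * T + of_nat (m + 2) * y ^ (m + 1) * ((x - y) * (x - y))) (0 + 0)"
    by (rule ceq_add)
  then show ?case unfolding e by simp
qed

lemma COMM:
  assumes p: "prime CARD('a::{field,finite})" and h: "(h::'a fps) \<in> Sset" and k: "k \<ge> 1"
    and hk: "ceq (CARD('a) * k) h fps_X"
    and m: "m \<ge> k" "m \<ge> 2"
    and u: "u = fps_X + fps_const c * fps_X ^ (CARD('a) * m + 1)"
    and z: "z \<in> Sset" and zc: "z oo (u oo h) = h oo u"
  shows "ceq (CARD('a) * (m + k)) z fps_X \<and> z $ (CARD('a) * (m + k)) = - c * h $ (CARD('a) * k)
     \<and> ceq (CARD('a) * (m + CARD('a) * k - 1) + 1) (fps_deriv z)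
          (1 - fps_const (c * of_nat m * (h $ (CARD('a) * k)) ^ CARD('a)) * fps_X ^ (CARD('a) * (m + CARD('a) * k - 1)))"
proof -
  define q where "q = CARD('a)"
  have q2: "q \<ge> 2" using prime_ge_2_nat[OF p] by (simp add: q_def)
  define a where "a = h $ (q * k)"
  define C where "C = fps_const c"
  define P1 where "P1 = u oo h"
  define P2 where "P2 = h oo u"
  define K where "K = q * (m + k)"
  define J where "J = q * (m + q * k - 1)"
  define Dh where "Dh = fps_deriv h"
  define Rh where "Rh = h - fps_X * Dh"
  have h0: "h $ 0 = 0" using Sset_0[OF h] .
  have u0: "u $ 0 = 0" using u by simp
  have uX: "ceq (q * m + 1) u fps_X" using u by (simp add: ceq_def fps_X_power_mult_nth q_def del: power_Suc)
  have hX: "ceq (q * k) (h - fps_X) 0" using ceq_to0[OF hk] by (simp add: q_def)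
  have P1e: "P1 = h + C * h ^ (q * m + 1)" unfolding P1_def u C_def q_def by (rule compose_u[OF h0])
  have qk2: "q * k \<ge> 2" using q2 k by (metis le_trans mult_le_mono nat_mult_1_right)
  have f1: "q * k \<ge> q" using k by simp
  have f2: "q * (q * k) \<ge> 2 * (q * k)" using q2 by (simp add: mult_le_mono1)
  have f3: "q * (q * m) \<ge> 2 * (q * m)" using q2 by (simp add: mult_le_mono1)
  have f4: "q * m \<ge> q * k" using m by simp
  have f5: "q * m \<ge> 2 * q" using m by (simp add: mult.commute)
  have e1: "(m - 1) * q = q * m - q" by (simp add: diff_mult_distrib mult.commute[of m q])
  have e2: "q * (m - 2) = q * m - 2 * q" by (simp add: diff_mult_distrib2 mult.commute)
  have e3: "q * (q * k - 1) = q * (q * k) - q" by (simp add: diff_mult_distrib2)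
  have e4: "q * k * q = q * (q * k)" by simp
  have Jx: "J = q * m + q * (q * k) - q" unfolding J_def using m
    by (simp add: diff_mult_distrib2 distrib_left)
  have Kx: "K = q * m + q * k" by (simp add: K_def distrib_left)
  have e5: "q * (q * m + 1 - 1) = q * (q * m)" by simp
  have ar1: "K + 1 \<le> q * k + q * (q * m + 1 - 1)" unfolding e5 using Kx f3 f5 q2 by linarith
  have ar2: "K + 1 \<le> 1 + (q * k * q + (m - 1) * q)" unfolding e1 e4 using Kx f1 f2 f5 by linarith
  have ar3: "J + 1 \<le> 2 * (q * k * q) + q * (m - 2)" unfolding e2 e4 Jx using f1 f2 f5 q2 by linarith
  have ar4: "J + 1 \<le> q * k - 1 + q * (q * m + 1 - 1)"
  proof -
    obtain d where d: "q * m = q * k + d" using f4 le_Suc_ex by blast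
    have "q * (q * m) = q * (q * k) + q * d" unfolding d by (simp add: distrib_left)
    moreover have "q * d \<ge> 2 * d" using q2 by (simp add: mult_le_mono1)
    ultimately show ?thesis unfolding Jx e5 using f1 f2 d q2 by linarith
  qed
  have ar5: "J + 1 \<le> K - 1 + q * (q * k - 1)" unfolding e3 Jx Kx using f1 f2 q2 by linarith
  have ar6: "J = q * (m - 1) + q * k * q"
  proof -
    have "q * (m - 1) = q * m - q" by (simp add: diff_mult_distrib2)
    then show ?thesis unfolding e4 Jx using f5 by linarith
  qed
  have ar7: "q * k \<le> K" "2 \<le> K" "q * k \<le> q * m" using Kx f4 f1 q2 by linarith+
  have i1: "ceq (K + 1) P2 (h + C * fps_X ^ (q * m + 1) * Dh)"
  proof -
    have "ceq (q * k + q * (q * m + 1 - 1)) (h oo u) (u * fps_deriv h + (h - fps_X * fps_deriv h))"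
      using TL[OF p h _ hk _ uX[unfolded q_def]] k by (simp add: q_def)
    moreover have "u * fps_deriv h + (h - fps_X * fps_deriv h) = h + C * fps_X ^ (q * m + 1) * Dh"
      by (simp add: u C_def Dh_def q_def algebra_simps)
    ultimately show ?thesis using ceq_mono[OF _ ar1] by (simp add: P2_def)
  qed
  have fr: "h ^ q - fps_X ^ q = (h - fps_X) ^ q"
    using frob[OF p, of "h - fps_X" fps_X] by (simp add: q_def)
  have hq: "ceq (q * k * q) (h ^ q - fps_X ^ q) 0" unfolding fr by (rule ceq0_power[OF hX])
  have h1: "ceq 1 h 0" using h0 by (simp add: ceq_def)
  have sx: "ceq q (h ^ q) 0" using ceq0_power[OF h1, of q] by simp
  have sy: "ceq q ((fps_X :: 'a fps) ^ q) 0" by (simp add: ceq_def)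
  have hqm: "ceq (q * k * q + (m - 1) * q) (h ^ (q * m) - fps_X ^ (q * m)) 0"
    using powdiff[OF hq sx sy, of m] m by (simp add: power_mult)
  have i2: "ceq (K + 1) P1 (h + C * h * fps_X ^ (q * m))"
  proof -
    have "ceq (1 + (q * k * q + (m - 1) * q)) (C * h * (h ^ (q * m) - fps_X ^ (q * m))) 0"
      using ceq0_mult_left[OF ceq0_mult[OF h1 hqm], of C] by (simp add: mult.assoc)
    then have "ceq (K + 1) (C * h * (h ^ (q * m) - fps_X ^ (q * m))) 0" using ceq_mono ar2 by blast
    moreover have "C * h * (h ^ (q * m) - fps_X ^ (q * m)) = P1 - (h + C * h * fps_X ^ (q * m))"
      by (simp add: P1e algebra_simps power_Suc2)
    ultimately show ?thesis by (metis ceq_from0)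
  qed
  have P1k: "ceq (q * k) P1 fps_X"
  proof -
    have "ceq (q * m) (C * h * fps_X ^ (q * m)) 0"
      using ceq0_mult_left[OF ceq0_Xpow[of "q * m" 1]] by (simp add: mult.commute)
    then have "ceq (q * k) (C * h * fps_X ^ (q * m)) 0" using ceq_mono ar7(3) by blast
    then have "ceq (q * k) (h + C * h * fps_X ^ (q * m)) (fps_X + 0)"
      using ceq_add[OF hk[folded q_def]] by blast
    moreover have "ceq (q * k) P1 (h + C * h * fps_X ^ (q * m))"
      using ceq_mono[OF i2] ar7(1) by simp
    ultimately show ?thesis using ceq_trans by fastforce
  qed
  have P10: "P1 $ 0 = 0" using P1k qk2 unfolding ceq_def by (metis fps_X_nth less_le_trans pos2 zero_neq_one)
  have P12: "ceq 2 P1 fps_X" using ceq_mono[OF P1k qk2] .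
  have R0: "ceq (q * k) Rh 0" using ceq_R[OF hk] by (simp add: Rh_def Dh_def q_def)
  have Ra: "Rh $ (q * k) = a"
  proof -
    have "(of_nat (q * k) :: 'a) = 0" using of_nat_eq0_iff[OF p] by (simp add: q_def)
    then show ?thesis using qk2 by (cases "q * k") (auto simp: Rh_def Dh_def a_def)
  qed
  have diffe: "(h + C * fps_X ^ (q * m + 1) * Dh) - (h + C * h * fps_X ^ (q * m)) = - (C * (fps_X ^ (q * m) * Rh))"
    by (simp add: Rh_def algebra_simps power_Suc2)
  have dlow: "(P2 - P1) $ n = (- (C * (fps_X ^ (q * m) * Rh))) $ n" if "n \<le> K" for n
    using that i1 i2 diffe[symmetric] by (simp add: ceq_def)
  have d0: "(P2 - P1) $ n = 0" if "n < K" for n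
  proof -
    have "n < q * m + q * k" using that by (simp add: K_def distrib_left)
    then have "(fps_X ^ (q * m) * Rh) $ n = 0"
      using R0 by (auto simp: fps_X_power_mult_nth ceq_def)
    then show ?thesis using dlow[of n] that by (simp add: C_def)
  qed
  have dK: "(P2 - P1) $ K = - c * a"
  proof -
    have "(fps_X ^ (q * m) * Rh) $ K = a" using Ra by (simp add: fps_X_power_mult_nth K_def distrib_left)
    then show ?thesis using dlow[of K] by (simp add: C_def)
  qed
  have zP: "z oo P1 = P2" using zc by (simp add: P1_def P2_def)
  have zD: "ceq D z fps_X" if "2 \<le> D" "D \<le> K" for D
    using that
  proof (induction D rule: dec_induct)
    case base then show ?case using Sset_0[OF z] Sset_1[OF z]
      by (auto simp: ceq_def less_2_cases_iff)
  next
    case (step D)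
    have "ceq (D + 1) ((z oo P1) - P1) (z - fps_X)"
      using LT[OF p z _ step.IH[OF _] _ P12] step by auto
    then have "z $ D - fps_X $ D = 0" using d0[of D] step zP by (auto simp: ceq_def)
    then show ?case using step.IH step by (auto simp: ceq_def less_Suc_eq)
  qed
  have zK: "ceq K z fps_X" using zD[of K] ar7(2) by simp
  have zKc: "z $ K = - c * a"
  proof -
    have "ceq (K + 1) ((z oo P1) - P1) (z - fps_X)"
      using LT[OF p z _ zK _ P12] ar7 by auto
    then have "z $ K - fps_X $ K = - c * a" using dK zP by (auto simp: ceq_def)
    then show ?thesis using ar7(2) by simp
  qed
  define Dz where "Dz = fps_deriv z"
  define Du where "Du = 1 + C * fps_X ^ (q * m)"
  have Du_eq: "fps_deriv u = Du" using deriv_u[OF p, of c m] u by (simp add: Du_def C_def q_def)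
  define Y where "Y = Dz oo P1"
  define W where "W = 1 + C * h ^ (q * m)"
  have Wc: "Du oo h = W" using h0
    by (simp add: Du_def W_def C_def fps_compose_add_distrib fps_compose_mult_distrib fps_compose_power[symmetric])
  have ch1: "fps_deriv P2 = (Dh oo u) * Du" by (simp add: P2_def fps_compose_deriv[OF u0] Dh_def Du_eq)
  have ch2: "fps_deriv P1 = W * Dh" using fps_compose_deriv[OF h0, of u] by (simp add: P1_def Du_eq Wc Dh_def)
  have ch3: "fps_deriv (z oo P1) = Y * fps_deriv P1" using fps_compose_deriv[OF P10, of z] by (simp add: Y_def Dz_def)
  have main: "Y * W * Dh = (Dh oo u) * Du" using ch1 ch2 ch3 zP by (simp add: mult.assoc)
  define e where "e = c * of_nat m * a ^ q"
  define E0 where "E0 = fps_const e * fps_X ^ J"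
  have pd2: "ceq (2 * (q * k * q) + q * (m - 2)) ((h ^ q) ^ ((m - 2) + 2) - (fps_X ^ q) ^ ((m - 2) + 2)
      - of_nat ((m - 2) + 2) * (fps_X ^ q) ^ ((m - 2) + 1) * (h ^ q - fps_X ^ q)) 0"
    using powdiff2[OF hq sx sy, of "m - 2"] .
  have m2: "(m - 2) + 2 = m" "(m - 2) + 1 = m - 1" using m by auto
  define H' where "H' = fps_shift (q * k) (h - fps_X)"
  have hsh: "h - fps_X = fps_X ^ (q * k) * H'" using ceq0_shift[OF hX] by (simp add: H'_def)
  have H'0: "H' $ 0 = a" using qk2 q2 by (simp add: H'_def a_def)
  have t1: "(fps_X ^ q) ^ (m - 1) * (h ^ q - fps_X ^ q) = fps_X ^ J * H' ^ q"
  proof -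
    have "(fps_X ^ q) ^ (m - 1) * (h ^ q - fps_X ^ q) = fps_X ^ (q * (m - 1)) * (fps_X ^ (q * k) * H') ^ q"
      unfolding fr hsh by (simp add: power_mult)
    also have "\<dots> = fps_X ^ (q * (m - 1)) * fps_X ^ (q * k * q) * H' ^ q"
      by (simp add: power_mult_distrib power_mult mult.assoc)
    also have "\<dots> = fps_X ^ J * H' ^ q" unfolding ar6 power_add by simp
    finally show ?thesis .
  qed
  have t2: "ceq (J + 1) (fps_X ^ J * H' ^ q) (fps_const (a ^ q) * fps_X ^ J)"
    using Xpow_lead[of J "H' ^ q"] by (simp add: fps_power_zeroth H'0)
  have hqm2: "ceq (J + 1) (h ^ (q * m)) (fps_X ^ (q * m) + of_nat m * (fps_const (a ^ q) * fps_X ^ J))"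
  proof -
    have eq: "(h ^ q) ^ m - (fps_X ^ q) ^ m - of_nat m * (fps_X ^ q) ^ (m - 1) * (h ^ q - fps_X ^ q)
        = h ^ (q * m) - (fps_X ^ (q * m) + of_nat m * (fps_X ^ J * H' ^ q))"
      by (simp only: power_mult mult.assoc t1 diff_diff_eq)
    have "ceq (J + 1) (h ^ (q * m) - (fps_X ^ (q * m) + of_nat m * (fps_X ^ J * H' ^ q))) 0"
      using ceq_mono[OF pd2 ar3] unfolding m2 eq .
    then have "ceq (J + 1) (h ^ (q * m)) (fps_X ^ (q * m) + of_nat m * (fps_X ^ J * H' ^ q))"
      by (rule ceq_from0)
    moreover have "ceq (J + 1) (fps_X ^ (q * m) + of_nat m * (fps_X ^ J * H' ^ q))
        (fps_X ^ (q * m) + of_nat m * (fps_const (a ^ q) * fps_X ^ J))"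
      by (intro ceq_add ceq_mult ceq_refl t2)
    ultimately show ?thesis by (rule ceq_trans)
  qed
  have WE: "ceq (J + 1) W (Du + E0)"
  proof -
    have "ceq (J + 1) W (1 + C * (fps_X ^ (q * m) + of_nat m * (fps_const (a ^ q) * fps_X ^ J)))"
      unfolding W_def by (intro ceq_add ceq_mult ceq_refl hqm2)
    moreover have "1 + C * (fps_X ^ (q * m) + of_nat m * (fps_const (a ^ q) * fps_X ^ J)) = Du + E0"
    proof -
      have "fps_const e = C * of_nat m * fps_const (a ^ q)"
        unfolding e_def C_def fps_of_nat[symmetric] by (simp only: fps_const_mult)
      moreover have "1 + C * (fps_X ^ (q * m) + of_nat m * (fps_const (a ^ q) * fps_X ^ J)) =
          (1 + C * fps_X ^ (q * m)) + C * of_nat m * fps_const (a ^ q) * fps_X ^ J"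
        by (simp only: distrib_left mult.assoc add.assoc)
      ultimately show ?thesis by (simp only: Du_def E0_def)
    qed
    ultimately show ?thesis by simp
  qed
  have Dhu: "ceq (J + 1) (Dh oo u) Dh"
  proof -
    have "ceq (q * k - 1 + CARD('a) * (q * m + 1 - 1)) ((Dh - 1) oo u) (Dh - 1)"
      by (rule psup_compose[OF p _ _ _ uX]) (use psup_deriv[OF p h] ceq_deriv_one[OF hk] in \<open>simp_all add: Dh_def q_def\<close>)
    then have "ceq (J + 1) ((Dh oo u) - 1) (Dh - 1)" using ceq_mono ar4
      by (simp add: fps_compose_sub_distrib q_def)
    from ceq_add[OF this ceq_refl[of _ 1]] show ?thesis by simp
  qed
  have Dh0: "Dh $ 0 = 1" using Sset_1[OF h] by (simp add: Dh_def)
  have W0: "W $ 0 = 1" using h0 m q2 by (simp add: W_def fps_power_zeroth zero_power)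
  have c1: "ceq (J + 1) (Y * W) Du"
  proof -
    have "ceq (J + 1) (Y * W * Dh) (Dh * Du)" unfolding main by (intro ceq_mult Dhu ceq_refl)
    then have "ceq (J + 1) (Y * W * Dh * inverse Dh) (Dh * Du * inverse Dh)"
      using ceq_mult[OF _ ceq_refl[of _ "inverse Dh"]] by blast
    moreover have DI: "Dh * inverse Dh = 1" using inverse_mult_eq_1'[of Dh] Dh0 by simp
    moreover have "Y * W * Dh * inverse Dh = Y * W * (Dh * inverse Dh)"
      "Dh * Du * inverse Dh = Du * (Dh * inverse Dh)" by (simp_all add: ac_simps)
    ultimately show ?thesis by simp
  qed
  have c2: "ceq (J + 1) Y (1 - E0 * inverse W)"
  proof -
    have "ceq (J + 1) Du (W - E0)" using ceq_diff[OF ceq_sym[OF WE] ceq_refl[of _ E0]] by simp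
    then have "ceq (J + 1) (Y * W) (W - E0)" using c1 ceq_trans by blast
    then have "ceq (J + 1) (Y * W * inverse W) ((W - E0) * inverse W)"
      using ceq_mult[OF _ ceq_refl[of _ "inverse W"]] by blast
    moreover have WI: "W * inverse W = 1" using inverse_mult_eq_1'[of W] W0 by simp
    moreover have "Y * W * inverse W = Y * (W * inverse W)" by (simp add: ac_simps)
    moreover have "(W - E0) * inverse W = W * inverse W - E0 * inverse W" by (rule left_diff_distrib)
    ultimately show ?thesis by simp
  qed
  have c3: "ceq (J + 1) Y (1 - E0)"
  proof -
    have "ceq (J + 1) (fps_X ^ J * inverse W) (fps_const ((inverse W) $ 0) * fps_X ^ J)" by (rule Xpow_lead)
    then have "ceq (J + 1) (fps_X ^ J * inverse W) (fps_X ^ J)" using W0 by simp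
    then have "ceq (J + 1) (fps_const e * (fps_X ^ J * inverse W)) (fps_const e * fps_X ^ J)"
      using ceq_mult[OF ceq_refl[of _ "fps_const e"]] by blast
    then have "ceq (J + 1) (E0 * inverse W) E0" by (simp add: E0_def mult.assoc)
    then have "ceq (J + 1) (1 - E0 * inverse W) (1 - E0)" by (intro ceq_diff ceq_refl)
    then show ?thesis using c2 ceq_trans by blast
  qed
  have c4: "ceq (J + 1) Dz Y"
  proof -
    have "ceq (K - 1 + CARD('a) * (CARD('a) * k - 1)) ((Dz - 1) oo P1) (Dz - 1)"
      by (rule psup_compose[OF p _ _ _ P1k[unfolded q_def]])
        (use psup_deriv[OF p z] ceq_deriv_one[OF zK] k in \<open>simp_all add: Dz_def q_def\<close>)
    then have "ceq (J + 1) (Y - 1) (Dz - 1)" using ceq_mono ar5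
      by (simp add: fps_compose_sub_distrib q_def Y_def)
    from ceq_sym[OF ceq_add[OF this ceq_refl[of _ 1]]] show ?thesis by simp
  qed
  have final: "ceq (J + 1) (fps_deriv z) (1 - E0)" using ceq_trans[OF c4 c3] by (simp add: Dz_def)
  show ?thesis using zK zKc final
    by (simp add: K_def J_def q_def E0_def e_def a_def)
qed

lemma G_mult: "x \<otimes>\<^bsub>Sgrp\<lparr>carrier := U\<rparr>\<^esub> y = x oo y" by (simp add: Sgrp_def)
lemma G_one: "\<one>\<^bsub>Sgrp\<lparr>carrier := U\<rparr>\<^esub> = fps_X" by (simp add: Sgrp_def)
lemma S_mult: "x \<otimes>\<^bsub>Sgrp\<^esub> y = x oo y" by (simp add: Sgrp_def)
lemma S_one: "\<one>\<^bsub>Sgrp\<^esub> = fps_X" by (simp add: Sgrp_def)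

lemma pow_G_S: "x [^]\<^bsub>Sgrp\<lparr>carrier := U\<rparr>\<^esub> (n::nat) = x [^]\<^bsub>Sgrp\<^esub> n"
  by (simp add: nat_pow_def)

lemma pow_itr:
  assumes G: "group (Sgrp\<lparr>carrier := U\<rparr>)" and w: "w \<in> U"
  shows "w [^]\<^bsub>Sgrp\<lparr>carrier := U\<rparr>\<^esub> (n::nat) = itr w n"
proof (induction n)
  case 0 then show ?case by (simp add: G_one)
next
  case (Suc n)
  interpret g: group "Sgrp\<lparr>carrier := U\<rparr>" by (rule G)
  have "w [^]\<^bsub>Sgrp\<lparr>carrier := U\<rparr>\<^esub> Suc n = w \<otimes>\<^bsub>Sgrp\<lparr>carrier := U\<rparr>\<^esub> w [^]\<^bsub>Sgrp\<lparr>carrier := U\<rparr>\<^esub> n"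
    by (rule g.nat_pow_Suc2) (simp add: w)
  then show ?case using Suc by (simp add: S_mult itr_Suc)
qed

lemma decomp_pow:
  assumes "(q::nat) \<ge> 2" "n > 0"
  shows "\<exists>e m. n = q ^ e * m \<and> \<not> q dvd m"
  using assms(2)
proof (induction n rule: less_induct)
  case (less n)
  show ?case
  proof (cases "q dvd n")
    case True
    then obtain n' where n': "n = q * n'" by blast
    then have "n' > 0" "n' < n" using less.prems assms(1) by auto
    then obtain e m where "n' = q ^ e * m" "\<not> q dvd m" using less.IH by blast
    then show ?thesis using n' by (intro exI[of _ "Suc e"] exI[of _ m]) auto
  next
    case False
    then show ?thesis by (intro exI[of _ 0] exI[of _ n]) auto
  qed
qed

lemma INF:
  assumes p: "prime CARD('a::{field,finite})" and G: "group (Sgrp\<lparr>carrier := U\<rparr>)"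
    and US: "U \<subseteq> (Sset :: 'a fps set)" and v: "v \<in> U" and j: "j \<ge> 1"
    and vX: "ceq (CARD('a) * j + 1) v fps_X" and cnz: "v $ (CARD('a) * j + 1) \<noteq> 0"
  shows "\<forall>n::nat. n > 0 \<longrightarrow> v [^]\<^bsub>Sgrp\<^esub> n \<noteq> \<one>\<^bsub>Sgrp\<^esub>"
proof (intro allI impI)
  interpret g: group "Sgrp\<lparr>carrier := U\<rparr>" by (rule G)
  define q where "q = CARD('a)"
  have q2: "q \<ge> 2" using prime_ge_2_nat[OF p] by (simp add: q_def)
  define c where "c = v $ (q * j + 1)"
  have key: "v [^]\<^bsub>Sgrp\<lparr>carrier := U\<rparr>\<^esub> (q ^ e) \<in> U \<and>
      ceq (q ^ (e + 1) * j + 1) (v [^]\<^bsub>Sgrp\<lparr>carrier := U\<rparr>\<^esub> (q ^ e)) fps_X \<and>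
      (v [^]\<^bsub>Sgrp\<lparr>carrier := U\<rparr>\<^esub> (q ^ e)) $ (q ^ (e + 1) * j + 1) = c ^ (q ^ e)" for e
  proof (induction e)
    case 0
    have "v [^]\<^bsub>Sgrp\<lparr>carrier := U\<rparr>\<^esub> (q ^ 0) = v"
      using pow_itr[OF G v, of 1] by (simp add: itr_Suc)
    then show ?case using v vX by (simp add: c_def q_def)
  next
    case (Suc e)
    define w where "w = v [^]\<^bsub>Sgrp\<lparr>carrier := U\<rparr>\<^esub> (q ^ e)"
    have wU: "w \<in> U" using Suc by (simp add: w_def)
    have wS: "w \<in> Sset" using wU US by blast
    have jj: "q ^ e * j \<ge> 1" using j q2 by simp
    have wX: "ceq (CARD('a) * (q ^ e * j) + 1) w fps_X" using Suc by (simp add: w_def q_def mult.assoc)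
    have wc: "w $ (CARD('a) * (q ^ e * j) + 1) \<noteq> 0"
      using Suc c_def cnz by (simp add: w_def q_def mult.assoc)
    have ip: "ceq (CARD('a) * (CARD('a) * (q ^ e * j)) + 1) (itr w CARD('a)) fps_X \<and>
        (itr w CARD('a)) $ (CARD('a) * (CARD('a) * (q ^ e * j)) + 1) = (w $ (CARD('a) * (q ^ e * j) + 1)) ^ CARD('a)"
      by (rule itr_p[OF p wS jj wX wc])
    have e1: "v [^]\<^bsub>Sgrp\<lparr>carrier := U\<rparr>\<^esub> (q ^ Suc e) = itr w q"
    proof -
      have "v [^]\<^bsub>Sgrp\<lparr>carrier := U\<rparr>\<^esub> (q ^ Suc e) = w [^]\<^bsub>Sgrp\<lparr>carrier := U\<rparr>\<^esub> q"
        unfolding w_def using g.nat_pow_pow[of v "q ^ e" q] v by (simp add: power_Suc2 del: power_Suc)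
      also have "\<dots> = itr w q" by (rule pow_itr[OF G wU])
      finally show ?thesis .
    qed
    have e2: "CARD('a) * (CARD('a) * (q ^ e * j)) + 1 = q ^ (Suc e + 1) * j + 1"
      by (simp add: q_def power_Suc mult.assoc)
    have e3: "(w $ (CARD('a) * (q ^ e * j) + 1)) ^ CARD('a) = c ^ (q ^ Suc e)"
    proof -
      have "q ^ (e + 1) * j + 1 = CARD('a) * (q ^ e * j) + 1" by (simp add: q_def mult.assoc)
      then have "w $ (CARD('a) * (q ^ e * j) + 1) = c ^ (q ^ e)" using Suc by (simp only: w_def)
      then show ?thesis by (simp add: power_mult[symmetric] q_def power_Suc2 del: power_Suc)
    qed
    have "v [^]\<^bsub>Sgrp\<lparr>carrier := U\<rparr>\<^esub> (q ^ Suc e) \<in> U" using g.nat_pow_closed[of v] v by simp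
    then have U': "itr w q \<in> U" using e1 by simp
    show ?case unfolding e1 e2[folded q_def, symmetric] using ip e3 U' unfolding q_def by simp
  qed
  fix n :: nat assume n: "n > 0"
  obtain e m where nm: "n = q ^ e * m" and mq: "\<not> q dvd m" using decomp_pow[OF q2 n] by blast
  define w where "w = v [^]\<^bsub>Sgrp\<lparr>carrier := U\<rparr>\<^esub> (q ^ e)"
  have wU: "w \<in> U" using key by (simp add: w_def)
  have wS: "w \<in> Sset" using wU US by blast
  define D where "D = q ^ (e + 1) * j + 1"
  have D2: "D \<ge> 2" using j q2 by (simp add: D_def)
  have il: "ceq D (itr w m) fps_X \<and> (itr w m) $ D = of_nat m * w $ D"
    by (rule itr_lead[OF p wS D2]) (use key in \<open>simp add: w_def D_def\<close>)
  have "(itr w m) $ D \<noteq> 0"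
  proof -
    have "(of_nat m :: 'a) \<noteq> 0" using of_nat_eq0_iff[OF p, of m] mq by (simp add: q_def)
    moreover have "w $ D \<noteq> 0" using key cnz by (simp add: w_def D_def c_def q_def)
    ultimately show ?thesis using il by simp
  qed
  moreover have "v [^]\<^bsub>Sgrp\<^esub> n = itr w m"
  proof -
    have "v [^]\<^bsub>Sgrp\<^esub> n = v [^]\<^bsub>Sgrp\<lparr>carrier := U\<rparr>\<^esub> (q ^ e * m)" using nm pow_G_S by metis
    also have "\<dots> = w [^]\<^bsub>Sgrp\<lparr>carrier := U\<rparr>\<^esub> m" unfolding w_def using g.nat_pow_pow v by simp
    also have "\<dots> = itr w m" by (rule pow_itr[OF G wU])
    finally show ?thesis .
  qed
  ultimately show "v [^]\<^bsub>Sgrp\<^esub> n \<noteq> \<one>\<^bsub>Sgrp\<^esub>" using D2 by (auto simp: S_one)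
qed

lemma u_in:
  assumes p: "prime CARD('a::{field,finite})" and m: "m \<ge> 1" and N: "CARD('a) * m + 1 \<ge> N0"
  shows "fps_X + fps_const (c::'a) * fps_X ^ (CARD('a) * m + 1) \<in> Snbhd N0"
proof -
  define q where "q = CARD('a)"
  have q2: "q \<ge> 2" using prime_ge_2_nat[OF p] by (simp add: q_def)
  define u where "u = fps_X + fps_const (c::'a) * fps_X ^ (q * m + 1)"
  have qm: "q * m + 1 \<ge> 3" using q2 m by (metis add_le_mono1 le_trans mult_le_mono nat_mult_1_right numeral_Bit1 numeral_One one_add_one)
  have un: "u $ n = (if n = 1 then 1 else 0) + (if n = q * m + 1 then c else 0)" for n
    by (simp add: u_def fps_X_power_mult_nth del: power_Suc)
  have "u \<in> Sset" unfolding Sset_def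
  proof (intro CollectI conjI allI impI)
    show "u $ 0 = 0" using un[of 0] by simp
    show "u $ 1 = 1" using un[of 1] qm q2 m by simp
    fix n assume "n \<ge> 2" "n mod CARD('a) \<noteq> 0 \<and> n mod CARD('a) \<noteq> 1"
    then show "u $ n = 0" using un[of n] mod_q1[OF q2, of m] by (auto simp: q_def)
  qed
  moreover have "\<forall>k<N0. u $ k = fps_X $ k" using un N by (auto simp: q_def)
  ultimately show ?thesis by (simp add: Snbhd_def u_def q_def)
qed

lemma CW:
  assumes p: "prime CARD('a::{field,finite})" and G: "group (Sgrp\<lparr>carrier := U\<rparr>)"
    and US: "U \<subseteq> (Sset :: 'a fps set)" and nb: "Snbhd N0 \<subseteq> U"
    and nH: "normal H (Sgrp\<lparr>carrier := U\<rparr>)" and hH: "h \<in> H" and k: "k \<ge> 1"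
    and hk: "ceq (CARD('a) * k) h fps_X" and m: "m \<ge> k" "m \<ge> 2" and N: "CARD('a) * m + 1 \<ge> N0"
  shows "\<exists>z\<in>H. ceq (CARD('a) * (m + k)) z fps_X \<and> z $ (CARD('a) * (m + k)) = - c * h $ (CARD('a) * k)
     \<and> ceq (CARD('a) * (m + CARD('a) * k - 1) + 1) (fps_deriv z)
          (1 - fps_const (c * of_nat m * (h $ (CARD('a) * k)) ^ CARD('a)) * fps_X ^ (CARD('a) * (m + CARD('a) * k - 1)))"
proof -
  define GG where "GG = Sgrp\<lparr>carrier := U\<rparr>"
  have cG: "carrier GG = U" by (simp add: GG_def)
  interpret nn: normal H GG using nH by (simp add: GG_def)
  define u where "u = fps_X + fps_const (c::'a) * fps_X ^ (CARD('a) * m + 1)"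
  have uU: "u \<in> carrier GG" using u_in[OF p _ N, of c] m nb by (auto simp: u_def cG)
  have hU: "h \<in> carrier GG" using hH nn.subset by auto
  define P1 where "P1 = u \<otimes>\<^bsub>GG\<^esub> h"
  define P2 where "P2 = h \<otimes>\<^bsub>GG\<^esub> u"
  define z where "z = P2 \<otimes>\<^bsub>GG\<^esub> inv\<^bsub>GG\<^esub> P1"
  have P1U: "P1 \<in> carrier GG" "P2 \<in> carrier GG" using uU hU by (simp_all add: P1_def P2_def)
  have zH: "z \<in> H"
  proof -
    have ih: "inv\<^bsub>GG\<^esub> h \<in> H" using hH by (rule subgroup.m_inv_closed[OF nn.subgroup_axioms])
    have c2: "u \<otimes>\<^bsub>GG\<^esub> inv\<^bsub>GG\<^esub> h \<otimes>\<^bsub>GG\<^esub> inv\<^bsub>GG\<^esub> u \<in> H"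
      using nn.inv_op_closed2[of u] uU ih by simp
    have "z = h \<otimes>\<^bsub>GG\<^esub> (u \<otimes>\<^bsub>GG\<^esub> inv\<^bsub>GG\<^esub> h \<otimes>\<^bsub>GG\<^esub> inv\<^bsub>GG\<^esub> u)"
      unfolding z_def P1_def P2_def using uU hU
      by (simp add: nn.inv_mult_group nn.m_assoc)
    then show ?thesis using subgroup.m_closed[OF nn.subgroup_axioms hH c2] by simp
  qed
  have zc: "z \<otimes>\<^bsub>GG\<^esub> P1 = P2"
    unfolding z_def using P1U by (simp add: nn.m_assoc)
  have mG: "\<And>x y. x \<otimes>\<^bsub>GG\<^esub> y = x oo y" by (simp add: GG_def Sgrp_def)
  have hU: "h \<in> U" using hU cG by simp
  have zS: "z \<in> Sset" using zH nn.subset US cG by auto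
  have hS: "h \<in> Sset" using hU US by auto
  have "z oo (u oo h) = h oo u" using zc by (simp add: mG P1_def P2_def)
  from COMM[OF p hS k hk m u_def zS this] zH show ?thesis by blast
qed

lemma GOOD:
  assumes p: "prime CARD('a::{field,finite})" and G: "group (Sgrp\<lparr>carrier := U\<rparr>)"
    and US: "U \<subseteq> (Sset :: 'a fps set)" and nb: "Snbhd N0 \<subseteq> U"
    and nH: "normal H (Sgrp\<lparr>carrier := U\<rparr>)" and hH: "h \<in> H" and k: "k \<ge> 1"
    and hk: "ceq (CARD('a) * k) h fps_X" and a0: "h $ (CARD('a) * k) \<noteq> 0"
  shows "\<exists>v\<in>H. \<exists>j\<ge>1. ceq (CARD('a) * j + 1) v fps_X \<and> v $ (CARD('a) * j + 1) \<noteq> 0"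
proof -
  define q where "q = CARD('a)"
  have q2: "q \<ge> 2" using prime_ge_2_nat[OF p] by (simp add: q_def)
  define a where "a = h $ (q * k)"
  have anz: "a \<noteq> 0" using a0 by (simp add: a_def q_def)
  define GG where "GG = Sgrp\<lparr>carrier := U\<rparr>"
  have cG: "carrier GG = U" by (simp add: GG_def)
  interpret nn: normal H GG using nH by (simp add: GG_def)
  have HS: "H \<subseteq> Sset" using nn.subset cG US by auto
  have mG: "\<And>x y. x \<otimes>\<^bsub>GG\<^esub> y = x oo y" by (simp add: GG_def Sgrp_def)
  define m where "m = q * (N0 + 3 * k + 3) + 1"
  have mge: "m \<ge> 2 * N0 + 6 * k + 7"
    using mult_le_mono1[OF q2, of "N0 + 3 * k + 3"] by (simp add: m_def)
  have m1: "(of_nat m :: 'a) = 1" using ofnat_q1[OF p, of "N0 + 3 * k + 3"] by (simp only: m_def q_def)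
  have qm: "q * m \<ge> m" using q2 by simp
  have mk1: "m \<ge> k" using mge by linarith
  have mk2: "m \<ge> 2" using mge by linarith
  have mk3: "q * m + 1 \<ge> N0" using mge qm by linarith
  note mk = mk1 mk2 mk3
  define J0 where "J0 = q * (m + q * k - 1)"
  define E where "E = fps_const (a ^ q) * fps_X ^ J0"
  obtain z0 where z0H: "z0 \<in> H" and z0X: "ceq (q * (m + k)) z0 fps_X"
      and z0D: "ceq (J0 + 1) (fps_deriv z0) (1 - E)"
  proof -
    from CW[OF p G US nb nH hH k hk mk(1,2) mk(3)[unfolded q_def], of 1]
    obtain z where "z \<in> H" "ceq (q * (m + k)) z fps_X"
      "ceq (J0 + 1) (fps_deriv z) (1 - fps_const (1 * of_nat m * a ^ q) * fps_X ^ J0)"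
      by (auto simp: q_def J0_def a_def)
    then show ?thesis using that m1 by (simp add: E_def)
  qed
  define m1' where "m1' = N0 + k + 2"
  define k1 where "k1 = m1' + k"
  obtain h1 where h1H: "h1 \<in> H" and h1X: "ceq (q * k1) h1 fps_X" and h1a: "h1 $ (q * k1) = - a"
  proof -
    have "CARD('a) * m1' \<ge> m1'" using q2 by (simp add: q_def)
    then have "m1' \<ge> k" "m1' \<ge> 2" "CARD('a) * m1' + 1 \<ge> N0" by (auto simp: m1'_def)
    from CW[OF p G US nb nH hH k hk this, of 1]
    obtain z where "z \<in> H" "ceq (q * (m1' + k)) z fps_X" "z $ (q * (m1' + k)) = - a"
      by (auto simp: q_def a_def)
    then show ?thesis using that by (simp add: k1_def)
  qed
  have k1: "k1 \<ge> 1" using k by (simp add: k1_def)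
  have canc: "\<exists>y\<in>H. ceq (q * K) y fps_X \<and> y $ (q * K) = t \<and> ceq (J0 + 1) (fps_deriv y) 1"
    if K: "m + k \<le> K" "K \<le> m + q * k - 1" for K t
  proof -
    define m2 where "m2 = K - k1"
    have Kk: "K \<ge> m + k" using K by simp
    have m2a: "m2 \<ge> N0 + 5 * k + 5" using Kk mge by (simp add: m2_def k1_def m1'_def)
    have qm2: "CARD('a) * m2 \<ge> m2" using q2 by (simp add: q_def)
    have m2b: "m2 \<ge> k1" using m2a by (simp add: k1_def m1'_def)
    have m2c: "m2 \<ge> 2" using m2a by simp
    have m2d: "CARD('a) * m2 + 1 \<ge> N0" using qm2 m2a by linarith
    have m2e: "m2 + k1 = K" using m2a by (simp add: m2_def)
    note m2 = m2b m2c m2d m2e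
    define J2 where "J2 = q * (m2 + q * k1 - 1)"
    have JJ: "J0 + 1 \<le> J2"
    proof -
      have a1: "q * k1 = q * m1' + q * k" by (simp add: k1_def distrib_left)
      have a2: "q * m1' \<ge> 2 * m1'" using q2 by simp
      have a3: "q * k \<ge> 1" using q2 k by simp
      have xy: "m + q * k - 1 + 1 \<le> m2 + q * k1 - 1"
        using a1 a2 a3 Kk m2(4) by (simp add: m1'_def k1_def m2_def)
      have "q * (m + q * k - 1) + q \<le> q * (m2 + q * k1 - 1)"
        using mult_le_mono2[OF xy, of q] by (simp add: distrib_left)
      then show ?thesis using q2 by (simp add: J0_def J2_def)
    qed
    from CW[OF p G US nb nH h1H k1 h1X[unfolded q_def] m2(1,2,3), of "t / a"]
    obtain y where yH: "y \<in> H" and yX: "ceq (q * K) y fps_X" and yt: "y $ (q * K) = t"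
      and yD: "ceq (J2 + 1) (fps_deriv y) (1 - fps_const (t / a * of_nat m2 * (h1 $ (q * k1)) ^ q) * fps_X ^ J2)"
      using m2(4) h1a anz by (auto simp: q_def J2_def)
    have "ceq (J0 + 1) (fps_deriv y) 1"
    proof -
      have "ceq (J0 + 1) (fps_deriv y) (1 - fps_const (t / a * of_nat m2 * (h1 $ (q * k1)) ^ q) * fps_X ^ J2)"
        using ceq_mono[OF yD] JJ by simp
      moreover have "ceq (J0 + 1) (1 - fps_const (t / a * of_nat m2 * (h1 $ (q * k1)) ^ q) * fps_X ^ J2) 1"
        using JJ by (auto simp: ceq_def)
      ultimately show ?thesis by (rule ceq_trans)
    qed
    then show ?thesis using yH yX yt by blast
  qed
  have ind: "\<exists>w\<in>H. ceq D w fps_X \<and> ceq (J0 + 1) (fps_deriv w) (1 - E)"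
    if D: "q * (m + k) \<le> D" "D \<le> J0 + 1" for D
    using D
  proof (induction D rule: dec_induct)
    case base then show ?case using z0H z0X z0D by blast
  next
    case (step D)
    then obtain w where wH: "w \<in> H" and wX: "ceq D w fps_X" and wD: "ceq (J0 + 1) (fps_deriv w) (1 - E)"
      by auto
    have D2: "D \<ge> 2"
    proof -
      have "q * (m + k) \<ge> m + k" using q2 by simp
      then show ?thesis using step mk by linarith
    qed
    have DJ: "D \<le> J0" using step by simp
    have wS: "w \<in> Sset" using wH HS by auto
    show ?case
    proof (cases "q dvd D")
      case True
      then obtain K where DK: "D = q * K" by blast
      have K1: "q * (m + k) \<le> q * K" using step DK by simp
      have K2: "q * K \<le> q * (m + q * k - 1)" using DJ DK by (simp add: J0_def)
      have K: "m + k \<le> K" "K \<le> m + q * k - 1" using K1 K2 q2 by simp_all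
      obtain y where yH: "y \<in> H" and yX: "ceq D y fps_X" and yt: "y $ D = - (w $ D)"
        and yD: "ceq (J0 + 1) (fps_deriv y) 1"
        using canc[OF K, of "- (w $ D)"] DK by auto
      have yS: "y \<in> Sset" using yH HS by auto
      have cl: "ceq D (y oo w) fps_X" "(y oo w) $ D = y $ D + w $ D"
        using CL[OF p yS D2 yX wX] by auto
      have "y oo w \<in> H" using subgroup.m_closed[OF nn.subgroup_axioms yH wH] by (simp add: mG)
      moreover have "ceq (Suc D) (y oo w) fps_X"
        using cl yt D2 by (auto simp: ceq_def less_Suc_eq)
      moreover have "ceq (J0 + 1) (fps_deriv (y oo w)) (1 - E)"
      proof -
        have w0: "w $ 0 = 0" using Sset_0[OF wS] .
        have "fps_deriv (y oo w) = (fps_deriv y oo w) * fps_deriv w" by (rule fps_compose_deriv[OF w0])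
        moreover have "ceq (J0 + 1) (fps_deriv y oo w) 1" using ceq_compose_left[OF yD, of w] by simp
        ultimately have "ceq (J0 + 1) (fps_deriv (y oo w)) (1 * fps_deriv w)"
          using ceq_mult[OF _ ceq_refl] by metis
        then show ?thesis using wD ceq_trans by auto
      qed
      ultimately show ?thesis by blast
    next
      case False
      have "w $ D = 0"
      proof (rule ccontr)
        assume nz: "w $ D \<noteq> 0"
        have "D mod q = 0 \<or> D mod q = 1" using Sset_supp[OF wS nz D2] by (simp add: q_def)
        then have D1: "D mod q = 1" using False by auto
        have oD: "(of_nat D :: 'a) = 1" using of_nat_mod_card[OF p, of D] D1 by (simp add: q_def)
        have "fps_deriv w $ (D - 1) = of_nat D * w $ D" using D2 by simp
        also have "\<dots> = w $ D" using oD by simp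
        finally have e1: "fps_deriv w $ (D - 1) = w $ D" .
        have "D - 1 < J0 + 1" using DJ by simp
        then have "fps_deriv w $ (D - 1) = (1 - E) $ (D - 1)" using wD unfolding ceq_def by blast
        also have "\<dots> = 0" using D2 DJ by (simp add: E_def fps_X_power_mult_nth)
        finally have "fps_deriv w $ (D - 1) = 0" .
        then show False using e1 nz by (simp del: fps_deriv_nth)
      qed
      then have "ceq (Suc D) w fps_X" using wX D2 by (auto simp: ceq_def less_Suc_eq)
      then show ?thesis using wH wD by blast
    qed
  qed
  obtain w where wH: "w \<in> H" and wX: "ceq (J0 + 1) w fps_X" and wD: "ceq (J0 + 1) (fps_deriv w) (1 - E)"
  proof -
    have "2 * k \<le> q * k" using mult_le_mono1[OF q2, of k] .
    then have "q * k \<ge> k + 1" using k by linarith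
    then have "m + k \<le> m + q * k - 1" by simp
    then have "q * (m + k) \<le> q * (m + q * k - 1)" by (rule mult_le_mono2)
    then have "q * (m + k) \<le> J0 + 1" unfolding J0_def by linarith
    then show ?thesis using ind[of "J0 + 1"] that by auto
  qed
  define j where "j = m + q * k - 1"
  have j1: "j \<ge> 1" using mk by (simp add: j_def)
  have Jj: "J0 = q * j" by (simp add: J0_def j_def)
  have "w $ (J0 + 1) = - (a ^ q)"
  proof -
    have oJ: "(of_nat (J0 + 1) :: 'a) = 1" using ofnat_q1[OF p, of j] by (simp add: Jj q_def)
    have "fps_deriv w $ J0 = of_nat (J0 + 1) * w $ (J0 + 1)" by simp
    then have "w $ (J0 + 1) = fps_deriv w $ J0" using oJ by simp
    also have "\<dots> = (1 - E) $ J0" using wD by (simp add: ceq_def)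
    also have "\<dots> = - (a ^ q)" using j1 q2 by (simp add: E_def Jj)
    finally show ?thesis .
  qed
  then have "w $ (q * j + 1) \<noteq> 0" using anz by (simp add: Jj)
  then show ?thesis using wH wX j1 Jj by (auto simp: q_def)
qed

theorem proposition6p2:
  fixes U H :: "('a::{field,finite}) fps set"
  assumes "prime CARD('a)"
    and "open_subgroup_S U"
    and "closed_in_S H"
    and "normal H (Sgrp\<lparr>carrier := U\<rparr>)"
    and "H \<noteq> {fps_X}"
  shows "\<exists>v \<in> H. \<exists>j::nat. j \<ge> 1 \<and>
           (\<forall>k < CARD('a) * j + 1. fps_nth v k = fps_nth fps_X k) \<and>
           fps_nth v ((CARD('a)) * j + 1) \<noteq> 0 \<and>
           (\<forall>n::nat. n > 0 \<longrightarrow> v [^]\<^bsub>Sgrp\<^esub> n \<noteq> \<one>\<^bsub>Sgrp\<^esub>)"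
proof -
  note p = assms(1)
  define q where "q = CARD('a)"
  have q2: "q \<ge> 2" using prime_ge_2_nat[OF p] by (simp add: q_def)
  have sU: "subgroup U Sgrp" and "\<exists>n. Snbhd n \<subseteq> U" using assms(2) by (auto simp: open_subgroup_S_def)
  then obtain N0 where nb: "Snbhd N0 \<subseteq> U" by blast
  have US: "U \<subseteq> Sset" using subgroup.subset[OF sU] by (simp add: Sgrp_def)
  have G: "group (Sgrp\<lparr>carrier := U\<rparr>)" using assms(4) by (simp add: normal_def)
  have sH: "subgroup H (Sgrp\<lparr>carrier := U\<rparr>)" using assms(4) by (simp add: normal_def)
  have HU: "H \<subseteq> U" using subgroup.subset[OF sH] by simp
  have XH: "fps_X \<in> H" using subgroup.one_closed[OF sH] by (simp add: Sgrp_def)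
  obtain h where hH: "h \<in> H" and hX: "h \<noteq> fps_X" using assms(5) XH by blast
  have hS: "h \<in> Sset" using hH HU US by auto
  have good: "\<exists>v\<in>H. \<exists>j\<ge>1. ceq (q * j + 1) v fps_X \<and> v $ (q * j + 1) \<noteq> 0"
  proof -
    have ex: "\<exists>n. h $ n \<noteq> fps_X $ n" using hX fps_ext by blast
    define n0 where "n0 = (LEAST n. h $ n \<noteq> fps_X $ n)"
    have n0: "h $ n0 \<noteq> fps_X $ n0" unfolding n0_def by (rule LeastI_ex[OF ex])
    have below: "ceq n0 h fps_X" unfolding ceq_def n0_def using not_less_Least by blast
    have n02: "n0 \<ge> 2"
    proof (rule ccontr)
      assume "\<not> n0 \<ge> 2"
      then have "n0 = 0 \<or> n0 = 1" by auto
      then show False using n0 Sset_0[OF hS] Sset_1[OF hS] by auto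
    qed
    have hn0: "h $ n0 \<noteq> 0" using n0 n02 by simp
    have "n0 mod q = 0 \<or> n0 mod q = 1" using Sset_supp[OF hS hn0 n02] by (simp add: q_def)
    then show ?thesis
    proof
      assume r1: "n0 mod q = 1"
      define j where "j = n0 div q"
      have nj: "n0 = q * j + 1" using r1 div_mult_mod_eq[of n0 q] by (simp add: j_def mult.commute)
      have "j \<ge> 1" using nj n02 by (cases j) auto
      then show ?thesis using hH below hn0 nj by blast
    next
      assume r0: "n0 mod q = 0"
      define k where "k = n0 div q"
      have nk: "n0 = q * k" using r0 div_mult_mod_eq[of n0 q] by (simp add: k_def mult.commute)
      have k1: "k \<ge> 1" using nk n02 by (cases k) auto
      show ?thesis
        using GOOD[OF p G US nb assms(4) hH k1] below hn0 nk by (simp add: q_def)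
    qed
  qed
  then obtain v j where vH: "v \<in> H" and j: "j \<ge> 1" and vX: "ceq (q * j + 1) v fps_X"
    and vc: "v $ (q * j + 1) \<noteq> 0" by blast
  have vU: "v \<in> U" using vH HU by auto
  have inf: "\<forall>n::nat. n > 0 \<longrightarrow> v [^]\<^bsub>Sgrp\<^esub> n \<noteq> \<one>\<^bsub>Sgrp\<^esub>"
    using INF[OF p G US vU j] vX vc by (simp add: q_def)
  have vX': "\<forall>k < CARD('a) * j + 1. fps_nth v k = fps_nth fps_X k" using vX unfolding ceq_def q_def .
  have vc': "fps_nth v (CARD('a) * j + 1) \<noteq> 0" using vc unfolding q_def .
  show ?thesis using vH j vX' vc' inf by blast
qed

end
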